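(* Let $(a,b,c)^T\in\mathbb{Z}^3$ with $\gcd(a,b,c)=1$, and let $K=\{(x,y,z)^T\in\mathbb{R}^3 : ax+by+cz=0\}$. Then there exists an orthogonal lattice basis of $K$, i.e. two mutually orthogonal vectors $u,v\in\mathbb{Z}^3\cap K$ forming a basis of $K$.
   Context: A lattice basis of $K$ means a basis of the real vector space $K$ consisting of vectors of $\mathbb{Z}^3$; orthogonality is with respect to the standard inner product on $\mathbb{R}^3$. *)

theory Defs
  imports "HOL-Analysis.Analysis"
begin

definition plane_K :: "int \<Rightarrow> int \<Rightarrow> int \<Rightarrow> (real^3) set" where
  "plane_K a b c = {x. of_int a * x$1 + of_int b * x$2 + of_int c * x$3 = 0}"

definition int_vec :: "real^3 \<Rightarrow> bool" where
  "int_vec x \<longleftrightarrow> (\<forall>i. x $ i \<in> \<int>)"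

end

theory Submission
  imports Defs
begin

lemma inner3: "(x::real^3) \<bullet> y = x$1*y$1 + x$2*y$2 + x$3*y$3"
  by (simp add: inner_vec_def sum_3)

lemma vec3_eq: "(x::real^3) = y \<longleftrightarrow> x$1 = y$1 \<and> x$2 = y$2 \<and> x$3 = y$3"
  by (simp add: vec_eq_iff forall_3)

lemma subspace_K: "subspace (plane_K a b c)"
  unfolding subspace_def plane_K_def
proof (intro conjI ballI allI, goal_cases)
  case (3 r x)
  then have "r * (of_int a * x$1 + of_int b * x$2 + of_int c * x$3) = 0" by simp
  then show ?case by (simp add: algebra_simps)
qed (auto simp: algebra_simps)

lemma helper:
  fixes u v :: "real^3"
  assumes "int_vec u" "int_vec v" "u \<in> plane_K a b c" "v \<in> plane_K a b c"
    "u \<bullet> v = 0" "u \<noteq> 0" "v \<noteq> 0"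
    "\<And>x. x \<in> plane_K a b c \<Longrightarrow> \<exists>p q. x = p *\<^sub>R u + q *\<^sub>R v"
  shows "\<exists>u v :: real^3. int_vec u \<and> int_vec v \<and> u \<in> plane_K a b c \<and> v \<in> plane_K a b c
           \<and> u \<bullet> v = 0 \<and> u \<noteq> v \<and> independent {u, v} \<and> span {u, v} = plane_K a b c"
proof (intro exI conjI)
  show "u \<noteq> v" using assms(5,6) by auto
  show "independent {u, v}"
    by (rule pairwise_orthogonal_independent)
       (use assms(5,6,7) in \<open>auto simp: pairwise_def orthogonal_def inner_commute\<close>)
  show "span {u, v} = plane_K a b c"
  proof
    show "span {u, v} \<subseteq> plane_K a b c"
      using assms(3,4) subspace_K by (simp add: span_minimal)
    show "plane_K a b c \<subseteq> span {u, v}"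
    proof
      fix x assume "x \<in> plane_K a b c"
      then obtain p q where "x = p *\<^sub>R u + q *\<^sub>R v" using assms(8) by blast
      then show "x \<in> span {u, v}"
        by (simp add: span_add span_mul span_base)
    qed
  qed
qed (use assms in auto)

theorem lemma2:
  fixes a b c :: int
  assumes "gcd a (gcd b c) = 1"
  shows "\<exists>u v :: real^3. int_vec u \<and> int_vec v \<and> u \<in> plane_K a b c \<and> v \<in> plane_K a b c
           \<and> u \<bullet> v = 0 \<and> u \<noteq> v \<and> independent {u, v} \<and> span {u, v} = plane_K a b c"
proof (cases "a = 0 \<and> b = 0")
  case True
  then have c: "c \<noteq> 0" using assms by auto
  show ?thesis
  proof (rule helper[of "vector [1,0,0]" "vector [0,1,0]"])
    fix x :: "real^3" assume "x \<in> plane_K a b c"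
    then have "x$3 = 0" using True c by (simp add: plane_K_def)
    then show "\<exists>p q. x = p *\<^sub>R vector [1,0,0] + q *\<^sub>R vector [0,1,0]"
      by (intro exI[of _ "x$1"] exI[of _ "x$2"]) (simp add: vec3_eq)
  qed (use True in \<open>auto simp: int_vec_def forall_3 plane_K_def inner3 vec3_eq\<close>)
next
  case False
  define s where "s = real_of_int a ^ 2 + real_of_int b ^ 2"
  have s: "s > 0" using False unfolding s_def
    by (metis add_pos_nonneg of_int_eq_0_iff power_zero_numeral sum_power2_gt_zero_iff sum_power2_ge_zero zero_less_power2)
  show ?thesis
  proof (rule helper[of "vector [- of_int b, of_int a, 0]" "vector [- of_int c * of_int a, - of_int c * of_int b, s]"])
    fix x :: "real^3" assume "x \<in> plane_K a b c"
    then have h: "of_int a * x$1 + of_int b * x$2 + of_int c * x$3 = 0" by (simp add: plane_K_def)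
    show "\<exists>p q. x = p *\<^sub>R vector [- of_int b, of_int a, 0] + q *\<^sub>R vector [- of_int c * of_int a, - of_int c * of_int b, s]"
    proof -
      have e1: "x$1 * s = (- of_int b * x$1 + of_int a * x$2) * - of_int b + x$3 * (- of_int c * of_int a)"
        using h unfolding s_def by (simp add: power2_eq_square algebra_simps) (smt (verit) h mult.commute mult.left_commute ring_class.ring_distribs)
      have e2: "x$2 * s = (- of_int b * x$1 + of_int a * x$2) * of_int a + x$3 * (- of_int c * of_int b)"
        using h unfolding s_def by (simp add: power2_eq_square algebra_simps) (smt (verit) h mult.commute mult.left_commute ring_class.ring_distribs)
      have "x = ((- of_int b * x$1 + of_int a * x$2) / s) *\<^sub>R vector [- of_int b, of_int a, 0] + (x$3 / s) *\<^sub>R vector [- of_int c * of_int a, - of_int c * of_int b, s]"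
        unfolding vec3_eq using s e1 e2 by (simp add: divide_simps)
      then show ?thesis by blast
    qed
  qed (use False s in \<open>auto simp: int_vec_def forall_3 plane_K_def inner3 vec3_eq s_def algebra_simps power2_eq_square\<close>)
qed

end
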